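(* In the setup of the context, let $J$ be the $F$-vector space with basis $(t_x)_{x\in B}$ and bilinear multiplication $t_xt_y:=\sum_{z\in B}\gamma_{x,y,z}t_{z^\ast}$. Then: (a) $J$ is an associative $F$-algebra with identity element $1_J=\sum_{d\in\mathcal D}n_dt_d$, where $\mathcal D:=\{x\in B\mid n_x\neq0\}$; (b) the $F$-linear map $\bar\tau:J\to F$, $\bar\tau(t_x):=n_x$, is a trace form making $J$ a symmetric $F$-algebra; (c) the $F$-linear map $t_x\mapsto t_x^\ast:=t_{x^\ast}$ is an antiautomorphism of $J$, and $(t_x)_{x\in B}$ is a $\ast$-symmetric basis of $J$ with respect to $\bar\tau$, i.e. $\bar\tau(t_{x^\ast}t_y)=\delta_{xy}$... more precisely $\bar\tau(t_xt_y^\ast)=\delta_{xy}$ for all $x,y\in B$.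
   Context: Setup: $\Gamma$ totally ordered abelian group; $K$ field with surjective valuation $\nu$, valuation ring $\mathcal O$, maximal ideal $\mathfrak m$, formally real residue field $F$. $H$ finite-dimensional split semisimple symmetric $K$-algebra with trace form $\tau$, $K$-linear involutive antiautomorphism $\ast$, $\ast$-symmetric basis $B$ ($B^\ast=B$, $\tau(bc^\ast)=\delta_{bc}$). Simple modules indexed by $\Lambda$, characters $\chi_\lambda$, Schur elements $c_\lambda$ with $\tau=\sum c_\lambda^{-1}\chi_\lambda$, $a_\lambda=-\tfrac12\nu(c_\lambda)\in\Gamma$. Fix a homomorphism $\langle a_\lambda\rangle\to K^\times$, $\gamma\mapsto v^\gamma$, with $\nu(v^\gamma)=\gamma$, and put $f_\lambda:=v^{2a_\lambda}c_\lambda\in\mathcal O^\times$. For each $\lambda$ choose a balanced matrix representation $\rho_\lambda$ of type $\lambda$ (irreducible with $\nu(\rho_\lambda(b))\ge-a_\lambda$ for all $b$ in every $\ast$-symmetric basis) and set $c^\lambda(x):=v^{a_\lambda}\rho_\lambda(x)\bmod\mathfrak m$. Define $\gamma_{x,y,z}:=\sum_\lambda\sum_{\mathfrak{s,t,u}}f_\lambda^{-1}c^\lambda(x)_{\mathfrak{st}}c^\lambda(y)_{\mathfrak{tu}}c^\lambda(z)_{\mathfrak{us}}$ and $n_x:=\sum_\lambda\sum_{\mathfrak s}f_\lambda^{-1}c^\lambda(x^\ast)_{\mathfrak{ss}}$ (elements of $F$). *)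

theory Defs
  imports Complex_Main
begin

text \<open>A valuation is modelled as a map nu : K -> Gamma whose values are only meaningful
  on nonzero elements (nu(0) = infinity is handled by the predicate val_ge).\<close>

definition val_ge :: "('k::zero \<Rightarrow> 'g::linorder) \<Rightarrow> 'g \<Rightarrow> 'k \<Rightarrow> bool" where
  "val_ge \<nu> \<gamma> x \<longleftrightarrow> x = 0 \<or> \<gamma> \<le> \<nu> x"

definition surj_valuation :: "('k::field \<Rightarrow> 'g::linordered_ab_group_add) \<Rightarrow> bool" where
  "surj_valuation \<nu> \<longleftrightarrow>
     (\<forall>x y. x \<noteq> 0 \<longrightarrow> y \<noteq> 0 \<longrightarrow> \<nu> (x * y) = \<nu> x + \<nu> y) \<and>
     (\<forall>x y. x \<noteq> 0 \<longrightarrow> y \<noteq> 0 \<longrightarrow> x + y \<noteq> 0 \<longrightarrow> min (\<nu> x) (\<nu> y) \<le> \<nu> (x + y)) \<and>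
     (\<forall>\<gamma>. \<exists>x. x \<noteq> 0 \<and> \<nu> x = \<gamma>)"

definition val_ring :: "('k::field \<Rightarrow> 'g::linordered_ab_group_add) \<Rightarrow> 'k set" where
  "val_ring \<nu> = {x. val_ge \<nu> 0 x}"

definition val_max :: "('k::field \<Rightarrow> 'g::linordered_ab_group_add) \<Rightarrow> 'k set" where
  "val_max \<nu> = {x. x = 0 \<or> 0 < \<nu> x}"

text \<open>red : O -> F is a surjective ring homomorphism with kernel m, i.e. F = O/m
  (values of red outside O are irrelevant).\<close>
definition residue_map :: "('k::field \<Rightarrow> 'g::linordered_ab_group_add) \<Rightarrow> ('k \<Rightarrow> 'f::field) \<Rightarrow> bool" where
  "residue_map \<nu> red \<longleftrightarrow>
     (\<forall>x\<in>val_ring \<nu>. \<forall>y\<in>val_ring \<nu>. red (x + y) = red x + red y \<and> red (x * y) = red x * red y) \<and>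
     red 1 = 1 \<and>
     red ` val_ring \<nu> = UNIV \<and>
     (\<forall>x\<in>val_ring \<nu>. red x = 0 \<longleftrightarrow> x \<in> val_max \<nu>)"

definition formally_real :: "'f::field itself \<Rightarrow> bool" where
  "formally_real _ \<longleftrightarrow> (\<forall>xs :: 'f list. sum_list (map (\<lambda>x. x ^ 2) xs) \<noteq> - 1)"

definition K_algebra :: "('k::field \<Rightarrow> 'h::ring_1 \<Rightarrow> 'h) \<Rightarrow> bool" where
  "K_algebra scale \<longleftrightarrow> vector_space scale \<and>
     (\<forall>c x y. scale c (x * y) = scale c x * y \<and> scale c (x * y) = x * scale c y)"

definition is_basis :: "('k::field \<Rightarrow> 'h::ring_1 \<Rightarrow> 'h) \<Rightarrow> 'h set \<Rightarrow> bool" where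
  "is_basis scale B \<longleftrightarrow> finite B \<and> \<not> module.dependent scale B \<and> module.span scale B = UNIV"

definition symmetrizing_trace :: "('k::field \<Rightarrow> 'h::ring_1 \<Rightarrow> 'h) \<Rightarrow> ('h \<Rightarrow> 'k) \<Rightarrow> bool" where
  "symmetrizing_trace scale \<tau> \<longleftrightarrow>
     (\<forall>x y. \<tau> (x + y) = \<tau> x + \<tau> y) \<and> (\<forall>c x. \<tau> (scale c x) = c * \<tau> x) \<and>
     (\<forall>x y. \<tau> (x * y) = \<tau> (y * x)) \<and>
     (\<forall>x. (\<forall>y. \<tau> (x * y) = 0) \<longrightarrow> x = 0)"

definition involutive_antiauto :: "('k::field \<Rightarrow> 'h::ring_1 \<Rightarrow> 'h) \<Rightarrow> ('h \<Rightarrow> 'h) \<Rightarrow> bool" where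
  "involutive_antiauto scale star \<longleftrightarrow>
     (\<forall>x y. star (x + y) = star x + star y) \<and> (\<forall>c x. star (scale c x) = scale c (star x)) \<and>
     (\<forall>x y. star (x * y) = star y * star x) \<and> (\<forall>x. star (star x) = x)"

definition star_sym_basis ::
  "('k::field \<Rightarrow> 'h::ring_1 \<Rightarrow> 'h) \<Rightarrow> ('h \<Rightarrow> 'k) \<Rightarrow> ('h \<Rightarrow> 'h) \<Rightarrow> 'h set \<Rightarrow> bool" where
  "star_sym_basis scale \<tau> star B \<longleftrightarrow> is_basis scale B \<and> star ` B = B \<and>
     (\<forall>b\<in>B. \<forall>c\<in>B. \<tau> (b * star c) = (if b = c then 1 else 0))"

text \<open>A d x d matrix over K is a function nat => nat => K, only entries with indices < d matter.\<close>
definition matrix_rep :: "('k::field \<Rightarrow> 'h::ring_1 \<Rightarrow> 'h) \<Rightarrow> nat \<Rightarrow> ('h \<Rightarrow> nat \<Rightarrow> nat \<Rightarrow> 'k) \<Rightarrow> bool" where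
  "matrix_rep scale d \<rho> \<longleftrightarrow>
     (\<forall>x y i j. i < d \<longrightarrow> j < d \<longrightarrow> \<rho> (x + y) i j = \<rho> x i j + \<rho> y i j) \<and>
     (\<forall>c x i j. i < d \<longrightarrow> j < d \<longrightarrow> \<rho> (scale c x) i j = c * \<rho> x i j) \<and>
     (\<forall>x y i j. i < d \<longrightarrow> j < d \<longrightarrow> \<rho> (x * y) i j = (\<Sum>k<d. \<rho> x i k * \<rho> y k j)) \<and>
     (\<forall>i j. i < d \<longrightarrow> j < d \<longrightarrow> \<rho> 1 i j = (if i = j then 1 else 0))"

text \<open>Split semisimplicity, with the rho_lambda (lambda in Lambda) a complete set of pairwise
  non-isomorphic (absolutely) irreducible representations, is expressed through the
  Wedderburn isomorphism H ~= prod_lambda M_{d_lambda}(K), h |-> (rho_lambda(h))_lambda.\<close>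
definition wedderburn ::
  "('k::field \<Rightarrow> 'h::ring_1 \<Rightarrow> 'h) \<Rightarrow> 'l set \<Rightarrow> ('l \<Rightarrow> nat) \<Rightarrow> ('l \<Rightarrow> 'h \<Rightarrow> nat \<Rightarrow> nat \<Rightarrow> 'k) \<Rightarrow> bool" where
  "wedderburn scale \<Lambda> d \<rho> \<longleftrightarrow> finite \<Lambda> \<and>
     (\<forall>lam\<in>\<Lambda>. 0 < d lam \<and> matrix_rep scale (d lam) (\<rho> lam)) \<and>
     (\<forall>x y. (\<forall>lam\<in>\<Lambda>. \<forall>i<d lam. \<forall>j<d lam. \<rho> lam x i j = \<rho> lam y i j) \<longrightarrow> x = y) \<and>
     (\<forall>M :: 'l \<Rightarrow> nat \<Rightarrow> nat \<Rightarrow> 'k. \<exists>x. \<forall>lam\<in>\<Lambda>. \<forall>i<d lam. \<forall>j<d lam. \<rho> lam x i j = M lam i j)"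

definition character :: "nat \<Rightarrow> ('h \<Rightarrow> nat \<Rightarrow> nat \<Rightarrow> 'k::field) \<Rightarrow> 'h \<Rightarrow> 'k" where
  "character d \<rho> x = (\<Sum>i<d. \<rho> x i i)"

definition balanced ::
  "('k::field \<Rightarrow> 'h::ring_1 \<Rightarrow> 'h) \<Rightarrow> ('h \<Rightarrow> 'k) \<Rightarrow> ('h \<Rightarrow> 'h) \<Rightarrow> ('k \<Rightarrow> 'g::linordered_ab_group_add)
    \<Rightarrow> 'g \<Rightarrow> nat \<Rightarrow> ('h \<Rightarrow> nat \<Rightarrow> nat \<Rightarrow> 'k) \<Rightarrow> bool" where
  "balanced scale \<tau> star \<nu> a d \<rho> \<longleftrightarrow>
     (\<forall>B'. star_sym_basis scale \<tau> star B' \<longrightarrow>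
        (\<forall>b\<in>B'. \<forall>i<d. \<forall>j<d. val_ge \<nu> (- a) (\<rho> b i j)))"

inductive_set gen_subgroup :: "'g::ab_group_add set \<Rightarrow> 'g set" for A where
  zero: "0 \<in> gen_subgroup A"
| gen: "x \<in> A \<Longrightarrow> x \<in> gen_subgroup A"
| add: "x \<in> gen_subgroup A \<Longrightarrow> y \<in> gen_subgroup A \<Longrightarrow> x + y \<in> gen_subgroup A"
| neg: "x \<in> gen_subgroup A \<Longrightarrow> - x \<in> gen_subgroup A"

definition vpow_hom :: "('k::field \<Rightarrow> 'g::linordered_ab_group_add) \<Rightarrow> 'g set \<Rightarrow> ('g \<Rightarrow> 'k) \<Rightarrow> bool" where
  "vpow_hom \<nu> G vp \<longleftrightarrow>
     (\<forall>\<gamma>\<in>G. vp \<gamma> \<noteq> 0 \<and> \<nu> (vp \<gamma>) = \<gamma>) \<and>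
     (\<forall>\<gamma>\<in>G. \<forall>\<delta>\<in>G. vp (\<gamma> + \<delta>) = vp \<gamma> * vp \<delta>)"

definition cmat :: "('k \<Rightarrow> 'f) \<Rightarrow> ('g \<Rightarrow> 'k::field) \<Rightarrow> ('l \<Rightarrow> 'g)
    \<Rightarrow> ('l \<Rightarrow> 'h \<Rightarrow> nat \<Rightarrow> nat \<Rightarrow> 'k) \<Rightarrow> 'l \<Rightarrow> 'h \<Rightarrow> nat \<Rightarrow> nat \<Rightarrow> 'f" where
  "cmat red vp a \<rho> lam x i j = red (vp (a lam) * \<rho> lam x i j)"

definition fres :: "('k \<Rightarrow> 'f) \<Rightarrow> ('g::ab_group_add \<Rightarrow> 'k::field) \<Rightarrow> ('l \<Rightarrow> 'g) \<Rightarrow> ('l \<Rightarrow> 'k) \<Rightarrow> 'l \<Rightarrow> 'f" where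
  "fres red vp a c lam = red (vp (a lam + a lam) * c lam)"

definition gam :: "'l set \<Rightarrow> ('l \<Rightarrow> nat) \<Rightarrow> ('k \<Rightarrow> 'f::field) \<Rightarrow> ('g::ab_group_add \<Rightarrow> 'k::field)
    \<Rightarrow> ('l \<Rightarrow> 'g) \<Rightarrow> ('l \<Rightarrow> 'k) \<Rightarrow> ('l \<Rightarrow> 'h \<Rightarrow> nat \<Rightarrow> nat \<Rightarrow> 'k) \<Rightarrow> 'h \<Rightarrow> 'h \<Rightarrow> 'h \<Rightarrow> 'f" where
  "gam \<Lambda> d red vp a c \<rho> x y z =
     (\<Sum>lam\<in>\<Lambda>. \<Sum>s<d lam. \<Sum>t<d lam. \<Sum>u<d lam.
        inverse (fres red vp a c lam) * cmat red vp a \<rho> lam x s t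
          * cmat red vp a \<rho> lam y t u * cmat red vp a \<rho> lam z u s)"

definition nconst :: "'l set \<Rightarrow> ('l \<Rightarrow> nat) \<Rightarrow> ('k \<Rightarrow> 'f::field) \<Rightarrow> ('g::ab_group_add \<Rightarrow> 'k::field)
    \<Rightarrow> ('l \<Rightarrow> 'g) \<Rightarrow> ('l \<Rightarrow> 'k) \<Rightarrow> ('l \<Rightarrow> 'h \<Rightarrow> nat \<Rightarrow> nat \<Rightarrow> 'k) \<Rightarrow> ('h \<Rightarrow> 'h) \<Rightarrow> 'h \<Rightarrow> 'f" where
  "nconst \<Lambda> d red vp a c \<rho> star x =
     (\<Sum>lam\<in>\<Lambda>. \<Sum>s<d lam. inverse (fres red vp a c lam) * cmat red vp a \<rho> lam (star x) s s)"

text \<open>J is the F-vector space with basis (t_x)_{x in B}; an element sum_x j_x t_x is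
  represented by its coefficient function j, which vanishes outside B.\<close>

definition Jcar :: "'h set \<Rightarrow> ('h \<Rightarrow> 'f::field) set" where
  "Jcar B = {j. \<forall>w. w \<notin> B \<longrightarrow> j w = 0}"

definition Jt :: "'h \<Rightarrow> 'h \<Rightarrow> 'f::field" where
  "Jt x = (\<lambda>w. if w = x then 1 else 0)"

text \<open>Bilinear extension of t_x t_y = sum_z G x y z t_{z*}: the coefficient of t_w is
  sum_{x,y} j_x j'_y G x y (w*).\<close>
definition Jmult :: "'h set \<Rightarrow> ('h \<Rightarrow> 'h) \<Rightarrow> ('h \<Rightarrow> 'h \<Rightarrow> 'h \<Rightarrow> 'f::field)
    \<Rightarrow> ('h \<Rightarrow> 'f) \<Rightarrow> ('h \<Rightarrow> 'f) \<Rightarrow> ('h \<Rightarrow> 'f)" where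
  "Jmult B star G j j' =
     (\<lambda>w. if w \<in> B then (\<Sum>x\<in>B. \<Sum>y\<in>B. j x * j' y * G x y (star w)) else 0)"

definition Jone :: "'h set \<Rightarrow> ('h \<Rightarrow> 'f::field) \<Rightarrow> ('h \<Rightarrow> 'f)" where
  "Jone B n = (\<lambda>w. if w \<in> {x \<in> B. n x \<noteq> 0} then n w else 0)"

definition Jtrace :: "'h set \<Rightarrow> ('h \<Rightarrow> 'f::field) \<Rightarrow> ('h \<Rightarrow> 'f) \<Rightarrow> 'f" where
  "Jtrace B n j = (\<Sum>x\<in>B. j x * n x)"

definition Jstar :: "('h \<Rightarrow> 'h) \<Rightarrow> ('h \<Rightarrow> 'f) \<Rightarrow> ('h \<Rightarrow> 'f)" where
  "Jstar star j = (\<lambda>w. j (star w))"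

end

theory Submission
  imports Defs
begin


locale Jset =
  fixes nu :: "'k::field \<Rightarrow> 'g::linordered_ab_group_add"
    and red :: "'k \<Rightarrow> 'f::field"
    and scale :: "'k \<Rightarrow> 'h::ring_1 \<Rightarrow> 'h"
    and tau :: "'h \<Rightarrow> 'k"
    and star :: "'h \<Rightarrow> 'h"
    and B :: "'h set"
    and Lam :: "'l set"
    and d :: "'l \<Rightarrow> nat"
    and rho :: "'l \<Rightarrow> 'h \<Rightarrow> nat \<Rightarrow> nat \<Rightarrow> 'k"
    and c :: "'l \<Rightarrow> 'k"
    and a :: "'l \<Rightarrow> 'g"
    and vp :: "'g \<Rightarrow> 'k"
  assumes val: "surj_valuation nu"
    and res: "residue_map nu red"
    and freal: "formally_real TYPE('f)"
    and alg: "K_algebra scale"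
    and trace: "symmetrizing_trace scale tau"
    and inv: "involutive_antiauto scale star"
    and Bsym: "star_sym_basis scale tau star B"
    and wed: "wedderburn scale Lam d rho"
    and schur_nz: "\<forall>lam\<in>Lam. c lam \<noteq> 0"
    and schur: "\<forall>h. tau h = (\<Sum>lam\<in>Lam. inverse (c lam) * character (d lam) (rho lam) h)"
    and a_def: "\<forall>lam\<in>Lam. a lam + a lam = - nu (c lam)"
    and vp_hom: "vpow_hom nu (gen_subgroup (a ` Lam)) vp"
    and bal: "\<forall>lam\<in>Lam. balanced scale tau star nu (a lam) (d lam) (rho lam)"
begin

abbreviation "VR \<equiv> val_ring nu"

subsection \<open>Valuation\<close>

lemma nu_mult: "x \<noteq> 0 \<Longrightarrow> y \<noteq> 0 \<Longrightarrow> nu (x * y) = nu x + nu y"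
  using val unfolding surj_valuation_def by blast

lemma nu_add: "x \<noteq> 0 \<Longrightarrow> y \<noteq> 0 \<Longrightarrow> x + y \<noteq> 0 \<Longrightarrow> min (nu x) (nu y) \<le> nu (x + y)"
  using val unfolding surj_valuation_def by blast

lemma nu_one: "nu 1 = 0"
  using nu_mult[of 1 1] by simp

lemma nu_inverse: "x \<noteq> 0 \<Longrightarrow> nu (inverse x) = - nu x"
  using nu_mult[of x "inverse x"] nu_one by (simp add: eq_neg_iff_add_eq_0 add.commute)

lemma O_iff: "x \<in> VR \<longleftrightarrow> x = 0 \<or> 0 \<le> nu x"
  unfolding val_ring_def val_ge_def by simp

lemma O_zero[simp]: "0 \<in> VR" by (simp add: O_iff)
lemma O_one[simp]: "1 \<in> VR" by (simp add: O_iff nu_one)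

lemma O_mult[intro]: "x \<in> VR \<Longrightarrow> y \<in> VR \<Longrightarrow> x * y \<in> VR"
  unfolding O_iff by (cases "x = 0 \<or> y = 0") (auto simp: nu_mult)

lemma O_add[intro]: "x \<in> VR \<Longrightarrow> y \<in> VR \<Longrightarrow> x + y \<in> VR"
  unfolding O_iff
proof (elim disjE)
  assume "0 \<le> nu x" "0 \<le> nu y"
  show "x + y = 0 \<or> 0 \<le> nu (x + y)"
  proof (cases "x = 0 \<or> y = 0 \<or> x + y = 0")
    case True then show ?thesis using \<open>0 \<le> nu x\<close> \<open>0 \<le> nu y\<close> by auto
  next
    case False
    then have "min (nu x) (nu y) \<le> nu (x + y)" using nu_add by blast
    then show ?thesis using \<open>0 \<le> nu x\<close> \<open>0 \<le> nu y\<close> by (simp add: min_def split: if_splits; meson order.trans)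
  qed
qed auto

lemma O_sum[intro]: "(\<And>x. x \<in> A \<Longrightarrow> f x \<in> VR) \<Longrightarrow> sum f A \<in> VR"
  by (induct A rule: infinite_finite_induct) auto

lemma red_add: "x \<in> VR \<Longrightarrow> y \<in> VR \<Longrightarrow> red (x + y) = red x + red y"
  using res unfolding residue_map_def by blast

lemma red_mult: "x \<in> VR \<Longrightarrow> y \<in> VR \<Longrightarrow> red (x * y) = red x * red y"
  using res unfolding residue_map_def by blast

lemma red_one[simp]: "red 1 = 1"
  using res unfolding residue_map_def by blast

lemma red_zero[simp]: "red 0 = 0"
proof -
  have "red 0 = red 0 + red 0" using red_add[of 0 0] by simp
  then show ?thesis by (metis add_left_cancel add.right_neutral)
qed

lemma red_eq0: "x \<in> VR \<Longrightarrow> red x = 0 \<longleftrightarrow> x = 0 \<or> 0 < nu x"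
  using res unfolding residue_map_def val_max_def by blast

lemma red_sum: "(\<And>x. x \<in> A \<Longrightarrow> f x \<in> VR) \<Longrightarrow> red (sum f A) = (\<Sum>x\<in>A. red (f x))"
proof (induct A rule: infinite_finite_induct)
  case (insert x F)
  then show ?case by (simp add: red_add O_sum)
qed auto

lemma unit_props:
  assumes "x \<noteq> 0" "nu x = 0"
  shows "x \<in> VR" "inverse x \<in> VR" "red x \<noteq> 0" "red (inverse x) = inverse (red x)"
proof -
  show xO: "x \<in> VR" using assms by (simp add: O_iff)
  show iO: "inverse x \<in> VR" using assms by (simp add: O_iff nu_inverse)
  show rx: "red x \<noteq> 0" using red_eq0[OF xO] assms by simp
  have "red x * red (inverse x) = 1"
    using red_mult[OF xO iO, symmetric] assms by simp
  then show "red (inverse x) = inverse (red x)" using rx by (simp add: field_simps)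
qed

lemma char0_F: "of_nat (Suc n) \<noteq> (0::'f)"
proof
  assume h: "of_nat (Suc n) = (0::'f)"
  have "sum_list (map (\<lambda>x. x ^ 2) (replicate n (1::'f))) = of_nat n"
    by (induct n) auto
  moreover have "(of_nat n :: 'f) = - 1" using h by (simp add: eq_neg_iff_add_eq_0 add.commute)
  ultimately show False using freal unfolding formally_real_def by metis
qed

lemma of_nat_O: "(of_nat n :: 'k) \<in> VR"
  by (induct n) auto

lemma red_of_nat: "red (of_nat n :: 'k) = of_nat n"
  by (induct n) (auto simp: red_add of_nat_O)

lemma nu_of_nat: assumes "n > 0" shows "(of_nat n :: 'k) \<noteq> 0" "nu (of_nat n :: 'k) = 0"
proof -
  obtain m where n: "n = Suc m" using assms gr0_conv_Suc by blast
  have r: "red (of_nat n :: 'k) \<noteq> 0" using red_of_nat[of n] char0_F[of m] n by simp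
  then show nz: "(of_nat n :: 'k) \<noteq> 0" by auto
  have "0 \<le> nu (of_nat n :: 'k)" using of_nat_O[of n] nz by (simp add: O_iff)
  moreover have "\<not> 0 < nu (of_nat n :: 'k)" using red_eq0[OF of_nat_O[of n]] r by simp
  ultimately show "nu (of_nat n :: 'k) = 0" by simp
qed

lemma double_inj: "(x::'g) + x = y + y \<Longrightarrow> x = y"
proof (rule ccontr)
  assume h: "x + x = y + y" "x \<noteq> y"
  then consider "x < y" | "y < x" by fastforce
  then show False
  proof cases
    case 1 then have "x + x < y + y" by (simp add: add_strict_mono)
    then show False using h by simp
  next
    case 2 then have "y + y < x + x" by (simp add: add_strict_mono)
    then show False using h by simp
  qed
qed

end



context Jset begin

subsection \<open>The algebra H\<close>

lemma module_scale: "module scale"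
  using alg unfolding K_algebra_def by (simp add: module_iff_vector_space)

lemma sc_add: "scale k (x + y) = scale k x + scale k y"
  using module_scale unfolding module_def by blast
lemma sc_ladd: "scale (k + l) x = scale k x + scale l x"
  using module_scale unfolding module_def by blast
lemma sc_sc: "scale k (scale l x) = scale (k * l) x"
  using module_scale unfolding module_def by blast
lemma sc_one[simp]: "scale 1 x = x"
  using module_scale unfolding module_def by blast
lemma sc_zero[simp]: "scale 0 x = 0" "scale k 0 = 0"
  using module.scale_zero_left[OF module_scale] module.scale_zero_right[OF module_scale] by auto
lemma sc_sum: "scale k (sum f A) = (\<Sum>x\<in>A. scale k (f x))"
  using module.scale_sum_right[OF module_scale] by blast
lemma sc_lsum: "scale (sum f A) x = (\<Sum>a\<in>A. scale (f a) x)"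
  using module.scale_sum_left[OF module_scale] by blast
lemma sc_multL: "scale k (x * y) = scale k x * y"
  using alg unfolding K_algebra_def by blast
lemma sc_multR: "scale k (x * y) = x * scale k y"
  using alg unfolding K_algebra_def by blast

lemma star_add: "star (x + y) = star x + star y"
  using inv unfolding involutive_antiauto_def by blast
lemma star_scale: "star (scale k x) = scale k (star x)"
  using inv unfolding involutive_antiauto_def by blast
lemma star_mult: "star (x * y) = star y * star x"
  using inv unfolding involutive_antiauto_def by blast
lemma star_star[simp]: "star (star x) = x"
  using inv unfolding involutive_antiauto_def by blast
lemma star_zero[simp]: "star 0 = 0"
  using star_add[of 0 0] by (metis add_left_cancel add.right_neutral)
lemma star_sum: "star (sum f A) = (\<Sum>x\<in>A. star (f x))"
  by (induct A rule: infinite_finite_induct) (auto simp: star_add)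
lemma star_one[simp]: "star 1 = 1"
proof -
  have "star (1::'h) = star 1 * star (star 1)" by simp
  also have "\<dots> = star (star 1 * 1)" by (simp only: star_mult)
  also have "\<dots> = 1" by simp
  finally show ?thesis .
qed

lemma tau_add: "tau (x + y) = tau x + tau y"
  using trace unfolding symmetrizing_trace_def by blast
lemma tau_scale: "tau (scale k x) = k * tau x"
  using trace unfolding symmetrizing_trace_def by blast
lemma tau_comm: "tau (x * y) = tau (y * x)"
  using trace unfolding symmetrizing_trace_def by blast
lemma tau_zero[simp]: "tau 0 = 0"
  using tau_add[of 0 0] by (metis add_left_cancel add.right_neutral)
lemma tau_sum: "tau (sum f A) = (\<Sum>x\<in>A. tau (f x))"
  by (induct A rule: infinite_finite_induct) (auto simp: tau_add)

lemma finB: "finite B"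
  using Bsym unfolding star_sym_basis_def is_basis_def by blast
lemma starB: "b \<in> B \<Longrightarrow> star b \<in> B"
  using Bsym unfolding star_sym_basis_def by blast
lemma dualB: "b \<in> B \<Longrightarrow> c' \<in> B \<Longrightarrow> tau (b * star c') = (if b = c' then 1 else 0)"
  using Bsym unfolding star_sym_basis_def by blast
lemma bijB: "bij_betw star B B"
  by (rule bij_betw_byWitness[of B star star]) (auto simp: starB)
lemma sum_starB: "(\<Sum>b\<in>B. f (star b)) = (\<Sum>b\<in>B. f b)"
  using sum.reindex_bij_betw[OF bijB, of f] by simp

lemma spanB: "\<exists>u. h = (\<Sum>v\<in>B. scale (u v) v)"
proof -
  have "h \<in> module.span scale B"
    using Bsym unfolding star_sym_basis_def is_basis_def by blast
  then show ?thesis using module.span_finite[OF module_scale finB] by auto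
qed

lemma expand: "h = (\<Sum>b\<in>B. scale (tau (h * star b)) b)"
proof -
  obtain u where u: "h = (\<Sum>v\<in>B. scale (u v) v)" using spanB by blast
  have "tau (h * star b) = u b" if "b \<in> B" for b
  proof -
    have "tau (h * star b) = (\<Sum>v\<in>B. u v * tau (v * star b))"
      unfolding u by (simp add: sum_distrib_right tau_sum flip: sc_multL tau_scale)
    also have "\<dots> = u b" using that finB by (simp add: dualB if_distrib cong: if_cong)
    finally show ?thesis .
  qed
  then show ?thesis by (subst u) (auto intro: sum.cong)
qed

lemma tau_star: "tau (star h) = tau h"
proof -
  have t: "tau (star b) = tau b" if "b \<in> B" for b
  proof -
    have "tau (1 * star b) = tau (star (1::'h) * star b)" by simp
    also have "\<dots> = tau ((\<Sum>c'\<in>B. scale (tau (1 * star c')) (star c')) * star b)"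
      by (subst expand[of 1]) (simp add: star_sum star_scale)
    also have "\<dots> = (\<Sum>c'\<in>B. tau (star c') * tau (star c' * star b))"
      by (simp add: sum_distrib_right tau_sum tau_scale flip: sc_multL)
    also have "\<dots> = (\<Sum>c'\<in>B. tau c' * tau (c' * star b))"
      by (rule sum_starB[where f = "\<lambda>x. tau x * tau (x * star b)"])
    also have "\<dots> = tau b" using that finB by (simp add: dualB if_distrib cong: if_cong)
    finally show ?thesis by simp
  qed
  have "tau (star h) = (\<Sum>b\<in>B. tau (h * star b) * tau (star b))"
    by (subst expand[of h]) (simp add: star_sum star_scale tau_sum tau_scale)
  also have "\<dots> = (\<Sum>b\<in>B. tau (h * star b) * tau b)"
    by (rule sum.cong) (auto simp: t)
  also have "\<dots> = tau h"
    by (subst (2) expand[of h]) (simp add: tau_sum tau_scale)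
  finally show ?thesis .
qed

subsection \<open>Representations\<close>

lemma finLam: "finite Lam"
  using wed unfolding wedderburn_def by blast
lemma d_pos: "lam \<in> Lam \<Longrightarrow> 0 < d lam"
  using wed unfolding wedderburn_def by blast
lemma mrep: "lam \<in> Lam \<Longrightarrow> matrix_rep scale (d lam) (rho lam)"
  using wed unfolding wedderburn_def by blast

lemma rho_add: "lam \<in> Lam \<Longrightarrow> i < d lam \<Longrightarrow> j < d lam \<Longrightarrow> rho lam (x + y) i j = rho lam x i j + rho lam y i j"
  using mrep unfolding matrix_rep_def by blast
lemma rho_scale: "lam \<in> Lam \<Longrightarrow> i < d lam \<Longrightarrow> j < d lam \<Longrightarrow> rho lam (scale k x) i j = k * rho lam x i j"
  using mrep unfolding matrix_rep_def by blast
lemma rho_mult: "lam \<in> Lam \<Longrightarrow> i < d lam \<Longrightarrow> j < d lam \<Longrightarrow> rho lam (x * y) i j = (\<Sum>k<d lam. rho lam x i k * rho lam y k j)"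
  using mrep unfolding matrix_rep_def by blast
lemma rho_one: "lam \<in> Lam \<Longrightarrow> i < d lam \<Longrightarrow> j < d lam \<Longrightarrow> rho lam 1 i j = (if i = j then 1 else 0)"
  using mrep unfolding matrix_rep_def by blast
lemma rho_zero: "lam \<in> Lam \<Longrightarrow> i < d lam \<Longrightarrow> j < d lam \<Longrightarrow> rho lam 0 i j = 0"
proof -
  assume h: "lam \<in> Lam" "i < d lam" "j < d lam"
  have "rho lam 0 i j = rho lam 0 i j + rho lam 0 i j" using rho_add[OF h, of 0 0] by simp
  then show ?thesis by (metis add_left_cancel add.right_neutral)
qed
lemma rho_sum: "lam \<in> Lam \<Longrightarrow> i < d lam \<Longrightarrow> j < d lam \<Longrightarrow> rho lam (sum f A) i j = (\<Sum>x\<in>A. rho lam (f x) i j)"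
  by (induct A rule: infinite_finite_induct) (auto simp: rho_add rho_zero)

lemma rho_eqI: "(\<And>lam i j. lam \<in> Lam \<Longrightarrow> i < d lam \<Longrightarrow> j < d lam \<Longrightarrow> rho lam x i j = rho lam y i j) \<Longrightarrow> x = y"
  using wed unfolding wedderburn_def by blast

definition elt :: "('l \<Rightarrow> nat \<Rightarrow> nat \<Rightarrow> 'k) \<Rightarrow> 'h" where
  "elt M = (SOME x. \<forall>lam\<in>Lam. \<forall>i<d lam. \<forall>j<d lam. rho lam x i j = M lam i j)"

lemma rho_elt: "lam \<in> Lam \<Longrightarrow> i < d lam \<Longrightarrow> j < d lam \<Longrightarrow> rho lam (elt M) i j = M lam i j"
proof -
  have "\<exists>x. \<forall>lam\<in>Lam. \<forall>i<d lam. \<forall>j<d lam. rho lam x i j = M lam i j"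
    using wed unfolding wedderburn_def by blast
  then have "\<forall>lam\<in>Lam. \<forall>i<d lam. \<forall>j<d lam. rho lam (elt M) i j = M lam i j"
    unfolding elt_def by (rule someI_ex)
  then show "lam \<in> Lam \<Longrightarrow> i < d lam \<Longrightarrow> j < d lam \<Longrightarrow> rho lam (elt M) i j = M lam i j" by blast
qed

lemma tau_schur: "tau h = (\<Sum>lam\<in>Lam. inverse (c lam) * (\<Sum>i<d lam. rho lam h i i))"
  using schur unfolding character_def by blast

end



lemma sum2_delta: assumes "i < n" "j < n" shows "(\<Sum>s<(n::nat). \<Sum>t<n. (if s = j \<and> t = i then f t s else 0)) = f i j"
proof -
  have "(\<Sum>s<n. \<Sum>t<n. (if s = j \<and> t = i then f t s else 0)) = (\<Sum>s<n. if s = j then f i s else 0)"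
    by (rule sum.cong) (auto simp: \<open>i < n\<close> sum.delta sum.delta')
  also have "\<dots> = f i j" using \<open>j < n\<close> by (simp add: sum.delta sum.delta')
  finally show ?thesis .
qed

lemma sum_delta_mult: "s < n \<Longrightarrow> (\<Sum>k<(n::nat). (if s = k then x else 0) * g k) = x * (g s::'a::semiring_0)"
  by (simp add: if_distrib[of "\<lambda>z. z * g _"] cong: if_cong)

lemma ifmult: "(if P then x else 0) * y = (if P then x * y else (0::'a::semiring_0))"
  "y * (if P then x else 0) = (if P then y * x else 0)" by simp_all

context Jset begin

lemma row_orth:
  assumes lm: "lam \<in> Lam" "mu \<in> Lam" and ij: "i < d lam" "j < d lam" and kl: "k < d mu" "l < d mu"
  shows "(\<Sum>b\<in>B. rho lam (star b) i j * rho mu b k l) = (if lam = mu \<and> j = k \<and> i = l then c lam else 0)"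
proof -
  define h where "h = elt (\<lambda>ka s t. if ka = lam \<and> s = j \<and> t = i then 1 else 0)"
  have rh: "rho ka h s t = (if ka = lam \<and> s = j \<and> t = i then 1 else 0)"
    if "ka \<in> Lam" "s < d ka" "t < d ka" for ka s t
    using rho_elt[OF that] unfolding h_def by simp
  have th: "tau (h * star b) = inverse (c lam) * rho lam (star b) i j" for b
  proof -
    have "tau (h * star b) = (\<Sum>ka\<in>Lam. inverse (c ka) * (\<Sum>s<d ka. \<Sum>t<d ka. rho ka h s t * rho ka (star b) t s))"
      unfolding tau_schur by (rule sum.cong) (auto simp: rho_mult)
    also have "\<dots> = (\<Sum>ka\<in>Lam. if ka = lam then inverse (c lam) * rho lam (star b) i j else 0)"
    proof (rule sum.cong)
      fix ka assume ka: "ka \<in> Lam"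
      show "inverse (c ka) * (\<Sum>s<d ka. \<Sum>t<d ka. rho ka h s t * rho ka (star b) t s)
          = (if ka = lam then inverse (c lam) * rho lam (star b) i j else 0)"
      proof (cases "ka = lam")
        case True
        have "(\<Sum>s<d ka. \<Sum>t<d ka. rho ka h s t * rho ka (star b) t s)
            = (\<Sum>s<d lam. \<Sum>t<d lam. (if s = j \<and> t = i then rho lam (star b) t s else 0))"
          using True ka by (intro sum.cong) (auto simp: rh)
        also have "\<dots> = rho lam (star b) i j" using ij by (rule sum2_delta)
        finally show ?thesis using True by simp
      next
        case False
        then show ?thesis using ka by (simp add: rh)
      qed
    qed simp
    also have "\<dots> = inverse (c lam) * rho lam (star b) i j" using lm finLam by simp
    finally show ?thesis .
  qed
  have "rho mu h k l = (\<Sum>b\<in>B. tau (h * star b) * rho mu b k l)"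
    by (subst expand[of h]) (simp add: rho_sum rho_scale lm kl)
  also have "\<dots> = inverse (c lam) * (\<Sum>b\<in>B. rho lam (star b) i j * rho mu b k l)"
    by (simp add: th sum_distrib_left mult.assoc)
  finally have e: "(if mu = lam \<and> k = j \<and> l = i then 1 else 0) = inverse (c lam) * (\<Sum>b\<in>B. rho lam (star b) i j * rho mu b k l)"
    using rh[OF lm(2) kl] by simp
  have cn: "c lam \<noteq> 0" using schur_nz lm by blast
  show ?thesis using e cn by (auto simp: field_simps split: if_splits)
qed

definition Z0 :: 'h where "Z0 = (\<Sum>b\<in>B. b * star b)"

lemma rho_Z0: assumes "lam \<in> Lam" "i < d lam" "l < d lam"
  shows "rho lam Z0 i l = (if i = l then of_nat (d lam) * c lam else 0)"
proof -
  have "rho lam Z0 i l = (\<Sum>b\<in>B. \<Sum>k<d lam. rho lam b i k * rho lam (star b) k l)"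
    unfolding Z0_def using assms by (simp add: rho_sum rho_mult)
  also have "\<dots> = (\<Sum>b\<in>B. \<Sum>k<d lam. rho lam (star b) i k * rho lam b k l)"
    using sum_starB[where f = "\<lambda>x. \<Sum>k<d lam. rho lam (star x) i k * rho lam x k l"] by simp
  also have "\<dots> = (\<Sum>k<d lam. \<Sum>b\<in>B. rho lam (star b) i k * rho lam b k l)"
    by (rule sum.swap)
  also have "\<dots> = (\<Sum>k<d lam. if i = l then c lam else 0)"
    using assms by (intro sum.cong) (auto simp: row_orth)
  finally show ?thesis by simp
qed

lemma star_Z0: "star Z0 = Z0"
  unfolding Z0_def by (simp add: star_sum star_mult)

definition eps :: "'l \<Rightarrow> 'h" where "eps lam = elt (\<lambda>ka s t. if ka = lam \<and> s = t then 1 else 0)"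

lemma rho_eps: "ka \<in> Lam \<Longrightarrow> s < d ka \<Longrightarrow> t < d ka \<Longrightarrow> rho ka (eps lam) s t = (if ka = lam \<and> s = t then 1 else 0)"
  unfolding eps_def by (simp add: rho_elt)

lemma sum_eps: "(\<Sum>lam\<in>Lam. eps lam) = 1"
  by (rule rho_eqI) (simp add: rho_sum rho_eps rho_one finLam)

lemma Z0_eps: assumes "lam \<in> Lam" shows "Z0 * eps lam = scale (of_nat (d lam) * c lam) (eps lam)"
proof (rule rho_eqI)
  fix ka s t assume h: "ka \<in> Lam" "s < d ka" "t < d ka"
  have "rho ka (Z0 * eps lam) s t = (\<Sum>k<d ka. (if s = k then of_nat (d ka) * c ka else 0) * (if ka = lam \<and> k = t then 1 else 0))"
    using h by (simp add: rho_mult rho_Z0 rho_eps)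
  also have "\<dots> = (if ka = lam \<and> s = t then of_nat (d lam) * c lam else 0)"
    using h by (subst sum_delta_mult) auto
  finally show "rho ka (Z0 * eps lam) s t = rho ka (scale (of_nat (d lam) * c lam) (eps lam)) s t"
    using h by (simp add: rho_scale rho_eps)
qed

lemma dc_nu: "lam \<in> Lam \<Longrightarrow> nu (of_nat (d lam) * c lam) = nu (c lam)"
  using nu_mult[of "of_nat (d lam)" "c lam"] nu_of_nat[of "d lam"] d_pos schur_nz by auto

lemma eps_star_a:
  assumes lm: "lam \<in> Lam" "mu \<in> Lam" and ij: "i < d mu" "j < d mu" and nz: "rho mu (star (eps lam)) i j \<noteq> 0"
  shows "a lam = a mu"
proof -
  have e: "star (eps lam) * Z0 = scale (of_nat (d lam) * c lam) (star (eps lam))"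
    using arg_cong[OF Z0_eps[OF lm(1)], of star] by (simp add: star_mult star_Z0 star_scale)
  have "rho mu (star (eps lam) * Z0) i j = rho mu (star (eps lam)) i j * (of_nat (d mu) * c mu)"
  proof -
    have "rho mu (star (eps lam) * Z0) i j = (\<Sum>k<d mu. rho mu (star (eps lam)) i k * (if k = j then of_nat (d mu) * c mu else 0))"
      using lm ij by (simp add: rho_mult rho_Z0)
    also have "\<dots> = rho mu (star (eps lam)) i j * (of_nat (d mu) * c mu)"
      using ij by (simp add: ifmult sum.delta sum.delta')
    finally show ?thesis .
  qed
  moreover have "rho mu (star (eps lam) * Z0) i j = (of_nat (d lam) * c lam) * rho mu (star (eps lam)) i j"
    unfolding e using lm ij by (simp add: rho_scale)
  ultimately have "rho mu (star (eps lam)) i j * (of_nat (d mu) * c mu) = (of_nat (d lam) * c lam) * rho mu (star (eps lam)) i j"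
    by metis
  then have "of_nat (d mu) * c mu = of_nat (d lam) * c lam" using nz by (metis mult.commute mult_cancel_right)
  then have "nu (c mu) = nu (c lam)" using dc_nu lm by metis
  then have "a lam + a lam = a mu + a mu" using a_def lm by simp
  then show ?thesis by (rule double_inj)
qed

definition Wg :: "('l \<Rightarrow> 'k) \<Rightarrow> 'h" where "Wg g = (\<Sum>lam\<in>Lam. scale (g lam) (eps lam))"

lemma rho_Wg: "mu \<in> Lam \<Longrightarrow> i < d mu \<Longrightarrow> j < d mu \<Longrightarrow> rho mu (Wg g) i j = (if i = j then g mu else 0)"
  unfolding Wg_def by (simp add: rho_sum rho_scale rho_eps finLam if_distrib cong: if_cong)

lemma Wg_star:
  assumes g: "\<And>lam mu. lam \<in> Lam \<Longrightarrow> mu \<in> Lam \<Longrightarrow> a lam = a mu \<Longrightarrow> g lam = g mu"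
  shows "star (Wg g) = Wg g"
proof (rule rho_eqI)
  fix mu i j assume h: "mu \<in> Lam" "i < d mu" "j < d mu"
  have "rho mu (star (Wg g)) i j = (\<Sum>lam\<in>Lam. g lam * rho mu (star (eps lam)) i j)"
    unfolding Wg_def using h by (simp add: star_sum star_scale rho_sum rho_scale)
  also have "\<dots> = (\<Sum>lam\<in>Lam. g mu * rho mu (star (eps lam)) i j)"
  proof (rule sum.cong)
    fix lam assume "lam \<in> Lam"
    then show "g lam * rho mu (star (eps lam)) i j = g mu * rho mu (star (eps lam)) i j"
      using eps_star_a[of lam mu i j] g[of lam mu] h by (cases "rho mu (star (eps lam)) i j = 0") auto
  qed simp
  also have "\<dots> = g mu * rho mu (star (\<Sum>lam\<in>Lam. eps lam)) i j"
    using h by (simp add: star_sum rho_sum sum_distrib_left)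
  also have "\<dots> = rho mu (Wg g) i j"
    using h by (simp add: sum_eps rho_one rho_Wg)
  finally show "rho mu (star (Wg g)) i j = rho mu (Wg g) i j" .
qed

end



context Jset begin

abbreviation "C \<equiv> cmat red vp a rho"
abbreviation "fr \<equiv> fres red vp a c"
abbreviation "GG \<equiv> gam Lam d red vp a c rho"
abbreviation "nn \<equiv> nconst Lam d red vp a c rho star"

definition fK :: "'l \<Rightarrow> 'k" where "fK lam = vp (a lam + a lam) * c lam"

lemma a_gen: "lam \<in> Lam \<Longrightarrow> a lam \<in> gen_subgroup (a ` Lam)"
  by (rule gen_subgroup.gen) simp

lemma vp_props: assumes "lam \<in> Lam"
  shows "vp (a lam) \<noteq> 0" "nu (vp (a lam)) = a lam" "vp (a lam + a lam) = vp (a lam) * vp (a lam)"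
    "vp (a lam + a lam) \<noteq> 0" "nu (vp (a lam + a lam)) = a lam + a lam"
proof -
  have g: "a lam \<in> gen_subgroup (a ` Lam)" using a_gen assms .
  have g2: "a lam + a lam \<in> gen_subgroup (a ` Lam)" using gen_subgroup.add[OF g g] .
  show "vp (a lam) \<noteq> 0" "nu (vp (a lam)) = a lam" "vp (a lam + a lam) = vp (a lam) * vp (a lam)"
    "vp (a lam + a lam) \<noteq> 0" "nu (vp (a lam + a lam)) = a lam + a lam"
    using vp_hom g g2 unfolding vpow_hom_def by auto
qed

lemma fK_props: assumes "lam \<in> Lam"
  shows "fK lam \<noteq> 0" "fK lam \<in> VR" "inverse (fK lam) \<in> VR" "fr lam \<noteq> 0"
    "red (inverse (fK lam)) = inverse (fr lam)" "fK lam = vp (a lam) * vp (a lam) * c lam"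
proof -
  have cn: "c lam \<noteq> 0" using schur_nz assms by blast
  show nz: "fK lam \<noteq> 0" unfolding fK_def using vp_props[OF assms] cn by simp
  have "nu (fK lam) = 0" unfolding fK_def using vp_props[OF assms] cn a_def assms
    by (simp add: nu_mult)
  note u = unit_props[OF nz this]
  have fr: "fr lam = red (fK lam)" unfolding fres_def fK_def ..
  show "fK lam \<in> VR" "inverse (fK lam) \<in> VR" "fr lam \<noteq> 0" "red (inverse (fK lam)) = inverse (fr lam)"
    using u fr by auto
  show "fK lam = vp (a lam) * vp (a lam) * c lam" unfolding fK_def using vp_props[OF assms] by simp
qed

lemma entO: assumes "lam \<in> Lam" "b \<in> B" "i < d lam" "j < d lam"
  shows "vp (a lam) * rho lam b i j \<in> VR"
proof -
  have "val_ge nu (- a lam) (rho lam b i j)"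
    using bal assms Bsym unfolding balanced_def by blast
  then show ?thesis unfolding val_ge_def O_iff using vp_props[OF assms(1)]
    by (cases "rho lam b i j = 0") (auto simp: nu_mult dest: add_left_mono[where c = "a lam"])
qed

lemma C_def': "C lam x i j = red (vp (a lam) * rho lam x i j)"
  unfolding cmat_def ..

lemma red_row_orth:
  assumes lm: "lam \<in> Lam" "mu \<in> Lam" and ij: "i < d lam" "j < d lam" and kl: "k < d mu" "l < d mu"
  shows "(\<Sum>b\<in>B. C lam (star b) i j * C mu b k l) = (if lam = mu \<and> j = k \<and> i = l then fr lam else 0)"
proof -
  have "(\<Sum>b\<in>B. C lam (star b) i j * C mu b k l)
      = (\<Sum>b\<in>B. red ((vp (a lam) * rho lam (star b) i j) * (vp (a mu) * rho mu b k l)))"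
    unfolding C_def' using assms by (intro sum.cong) (auto simp: red_mult entO starB)
  also have "\<dots> = red (\<Sum>b\<in>B. (vp (a lam) * rho lam (star b) i j) * (vp (a mu) * rho mu b k l))"
    using assms by (intro red_sum[symmetric]) (auto simp: entO starB)
  also have "(\<Sum>b\<in>B. (vp (a lam) * rho lam (star b) i j) * (vp (a mu) * rho mu b k l))
      = vp (a lam) * vp (a mu) * (\<Sum>b\<in>B. rho lam (star b) i j * rho mu b k l)"
    by (simp add: sum_distrib_left ac_simps)
  also have "\<dots> = vp (a lam) * vp (a mu) * (if lam = mu \<and> j = k \<and> i = l then c lam else 0)"
    using row_orth[OF assms] by simp
  finally show ?thesis
    using fK_props(6)[OF lm(1)] unfolding fres_def fK_def by auto
qed

lemma red_col_orth:
  assumes xy: "x \<in> B" "y \<in> B"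
  shows "(\<Sum>lam\<in>Lam. inverse (fr lam) * (\<Sum>k<d lam. \<Sum>l<d lam. C lam x k l * C lam (star y) l k))
     = (if x = y then 1 else 0)"
proof -
  have "tau (x * star y) = (\<Sum>lam\<in>Lam. inverse (c lam) * (\<Sum>k<d lam. \<Sum>l<d lam. rho lam x k l * rho lam (star y) l k))"
    unfolding tau_schur by (intro sum.cong) (auto simp: rho_mult)
  also have "\<dots> = (\<Sum>lam\<in>Lam. inverse (fK lam) *
       (\<Sum>k<d lam. \<Sum>l<d lam. (vp (a lam) * rho lam x k l) * (vp (a lam) * rho lam (star y) l k)))"
  proof (intro sum.cong refl)
    fix lam assume lm: "lam \<in> Lam"
    have cn: "c lam \<noteq> 0" using schur_nz lm by blast
    have "(\<Sum>k<d lam. \<Sum>l<d lam. (vp (a lam) * rho lam x k l) * (vp (a lam) * rho lam (star y) l k))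
      = vp (a lam) * vp (a lam) * (\<Sum>k<d lam. \<Sum>l<d lam. rho lam x k l * rho lam (star y) l k)"
      by (simp add: sum_distrib_left ac_simps)
    then show "inverse (c lam) * (\<Sum>k<d lam. \<Sum>l<d lam. rho lam x k l * rho lam (star y) l k)
      = inverse (fK lam) * (\<Sum>k<d lam. \<Sum>l<d lam. (vp (a lam) * rho lam x k l) * (vp (a lam) * rho lam (star y) l k))"
      using fK_props(6)[OF lm] vp_props(1)[OF lm] cn by (simp add: field_simps)
  qed
  finally have e: "tau (x * star y) = \<dots>" .
  have inner: "inverse (fK lam) * (\<Sum>k<d lam. \<Sum>l<d lam. (vp (a lam) * rho lam x k l) * (vp (a lam) * rho lam (star y) l k)) \<in> VR
     \<and> red (inverse (fK lam) * (\<Sum>k<d lam. \<Sum>l<d lam. (vp (a lam) * rho lam x k l) * (vp (a lam) * rho lam (star y) l k)))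
       = inverse (fr lam) * (\<Sum>k<d lam. \<Sum>l<d lam. C lam x k l * C lam (star y) l k)" if lm: "lam \<in> Lam" for lam
  proof -
    have m: "(vp (a lam) * rho lam x k l) * (vp (a lam) * rho lam (star y) l k) \<in> VR
       \<and> red ((vp (a lam) * rho lam x k l) * (vp (a lam) * rho lam (star y) l k)) = C lam x k l * C lam (star y) l k"
      if "k < d lam" "l < d lam" for k l
      using entO[OF lm xy(1) that] entO[OF lm starB[OF xy(2)] that(2,1)] by (simp add: O_mult red_mult C_def')
    have TO: "(\<Sum>k<d lam. \<Sum>l<d lam. (vp (a lam) * rho lam x k l) * (vp (a lam) * rho lam (star y) l k)) \<in> VR"
      by (rule O_sum, rule O_sum) (simp add: m)
    have "red (\<Sum>k<d lam. \<Sum>l<d lam. (vp (a lam) * rho lam x k l) * (vp (a lam) * rho lam (star y) l k))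
       = (\<Sum>k<d lam. \<Sum>l<d lam. C lam x k l * C lam (star y) l k)"
      apply (subst red_sum)
       apply (rule O_sum, simp add: m)
      apply (rule sum.cong, rule refl)
      apply (subst red_sum)
       apply (simp add: m)
      apply (rule sum.cong, rule refl)
      apply (simp add: m)
      done
    then show ?thesis using TO fK_props[OF lm] by (simp add: O_mult red_mult)
  qed
  have "red (tau (x * star y)) = (\<Sum>lam\<in>Lam. inverse (fr lam) * (\<Sum>k<d lam. \<Sum>l<d lam. C lam x k l * C lam (star y) l k))"
    unfolding e by (subst red_sum) (auto simp: inner intro: sum.cong)
  then show ?thesis using dualB[OF xy] by (auto split: if_splits)
qed

end



context Jset begin

lemma rho_Wg_mult: assumes "mu \<in> Lam" "i < d mu" "j < d mu"
  shows "rho mu (Wg g * h) i j = g mu * rho mu h i j" "rho mu (h * Wg g) i j = rho mu h i j * g mu"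
proof -
  have "rho mu (Wg g * h) i j = (\<Sum>k<d mu. (if i = k then g mu else 0) * rho mu h k j)"
    using assms by (simp add: rho_mult rho_Wg)
  then show "rho mu (Wg g * h) i j = g mu * rho mu h i j" using assms by (simp add: sum_delta_mult)
  have "rho mu (h * Wg g) i j = (\<Sum>k<d mu. rho mu h i k * (if k = j then g mu else 0))"
    using assms by (simp add: rho_mult rho_Wg)
  then show "rho mu (h * Wg g) i j = rho mu h i j * g mu" using assms
    by (simp add: ifmult sum.delta)
qed

lemma Wg_central: "Wg g * h = h * Wg g"
  by (rule rho_eqI) (simp add: rho_Wg_mult mult.commute)

abbreviation "W1 \<equiv> Wg (\<lambda>lam. vp (a lam))"
abbreviation "W2 \<equiv> Wg (\<lambda>lam. inverse (vp (a lam)))"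

lemma W1_star: "star W1 = W1" by (rule Wg_star) simp
lemma W2_star: "star W2 = W2" by (rule Wg_star) simp

lemma GG_formula:
  assumes xyz: "x \<in> B" "y \<in> B" "z \<in> B"
  shows "GG x y z = red (tau (W1 * (x * (y * z))))"
proof -
  define T where "T lam = (\<Sum>s<d lam. \<Sum>t<d lam. \<Sum>u<d lam. (vp (a lam) * rho lam x s t) * (vp (a lam) * rho lam y t u) * (vp (a lam) * rho lam z u s))" for lam
  have inner: "inverse (fK lam) * T lam \<in> VR \<and>
     red (inverse (fK lam) * T lam) = (\<Sum>s<d lam. \<Sum>t<d lam. \<Sum>u<d lam. inverse (fr lam) * C lam x s t * C lam y t u * C lam z u s)"
    if lm: "lam \<in> Lam" for lam
  proof -
    have m: "(vp (a lam) * rho lam x s t) * (vp (a lam) * rho lam y t u) * (vp (a lam) * rho lam z u s) \<in> VR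
       \<and> red ((vp (a lam) * rho lam x s t) * (vp (a lam) * rho lam y t u) * (vp (a lam) * rho lam z u s)) = C lam x s t * C lam y t u * C lam z u s"
      if "s < d lam" "t < d lam" "u < d lam" for s t u
      using entO[OF lm xyz(1) that(1,2)] entO[OF lm xyz(2) that(2,3)] entO[OF lm xyz(3) that(3,1)]
      by (simp add: O_mult red_mult C_def')
    have TO: "T lam \<in> VR" unfolding T_def
      by (rule O_sum, rule O_sum, rule O_sum) (simp add: m)
    have "red (T lam) = (\<Sum>s<d lam. \<Sum>t<d lam. \<Sum>u<d lam. C lam x s t * C lam y t u * C lam z u s)"
      unfolding T_def
      apply (subst red_sum)
       apply (rule O_sum, rule O_sum, simp add: m)
      apply (rule sum.cong, rule refl)
      apply (subst red_sum)
       apply (rule O_sum, simp add: m)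
      apply (rule sum.cong, rule refl)
      apply (subst red_sum)
       apply (simp add: m)
      apply (rule sum.cong, rule refl)
      apply (simp add: m)
      done
    then show ?thesis using TO fK_props(1-5)[OF lm]
      by (simp add: O_mult red_mult sum_distrib_left mult.assoc)
  qed
  have e: "tau (W1 * (x * (y * z))) = (\<Sum>lam\<in>Lam. inverse (fK lam) * T lam)"
    unfolding tau_schur
  proof (intro sum.cong refl)
    fix lam assume lm: "lam \<in> Lam"
    have cn: "c lam \<noteq> 0" using schur_nz lm by blast
    have vn: "vp (a lam) \<noteq> 0" using vp_props[OF lm] by simp
    have "(\<Sum>i<d lam. rho lam (W1 * (x * (y * z))) i i)
       = vp (a lam) * (\<Sum>s<d lam. \<Sum>t<d lam. \<Sum>u<d lam. rho lam x s t * rho lam y t u * rho lam z u s)"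
    proof -
      have "(\<Sum>i<d lam. rho lam (W1 * (x * (y * z))) i i) = (\<Sum>i<d lam. vp (a lam) * rho lam (x * (y * z)) i i)"
        using lm by (intro sum.cong) (simp_all add: rho_Wg_mult)
      also have "\<dots> = vp (a lam) * (\<Sum>s<d lam. \<Sum>t<d lam. \<Sum>u<d lam. rho lam x s t * rho lam y t u * rho lam z u s)"
        using lm by (simp add: rho_mult sum_distrib_left ac_simps)
      finally show ?thesis .
    qed
    moreover have "T lam = vp (a lam) * vp (a lam) * vp (a lam) * (\<Sum>s<d lam. \<Sum>t<d lam. \<Sum>u<d lam. rho lam x s t * rho lam y t u * rho lam z u s)"
      unfolding T_def by (simp add: sum_distrib_left ac_simps)
    ultimately show "inverse (c lam) * (\<Sum>i<d lam. rho lam (W1 * (x * (y * z))) i i) = inverse (fK lam) * T lam"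
      using fK_props(6)[OF lm] cn vn by (simp add: field_simps)
  qed
  have "red (tau (W1 * (x * (y * z)))) = (\<Sum>lam\<in>Lam. red (inverse (fK lam) * T lam))"
    unfolding e by (rule red_sum) (simp add: inner)
  also have "\<dots> = GG x y z"
    unfolding gam_def by (rule sum.cong) (simp_all add: inner)
  finally show ?thesis ..
qed

lemma nn_formula:
  assumes x: "x \<in> B"
  shows "nn x = red (tau (W2 * star x))"
proof -
  define T where "T lam = (\<Sum>s<d lam. vp (a lam) * rho lam (star x) s s)" for lam
  have inner: "inverse (fK lam) * T lam \<in> VR \<and>
     red (inverse (fK lam) * T lam) = (\<Sum>s<d lam. inverse (fr lam) * C lam (star x) s s)"
    if lm: "lam \<in> Lam" for lam
  proof -
    have m: "vp (a lam) * rho lam (star x) s s \<in> VR" if "s < d lam" for s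
      using entO[OF lm starB[OF x] that that] .
    have TO: "T lam \<in> VR" unfolding T_def by (rule O_sum) (simp add: m)
    have "red (T lam) = (\<Sum>s<d lam. C lam (star x) s s)"
      unfolding T_def by (subst red_sum) (simp_all add: m C_def')
    then show ?thesis using TO fK_props(1-5)[OF lm]
      by (simp add: O_mult red_mult sum_distrib_left mult.assoc)
  qed
  have e: "tau (W2 * star x) = (\<Sum>lam\<in>Lam. inverse (fK lam) * T lam)"
    unfolding tau_schur
  proof (intro sum.cong refl)
    fix lam assume lm: "lam \<in> Lam"
    have cn: "c lam \<noteq> 0" using schur_nz lm by blast
    have vn: "vp (a lam) \<noteq> 0" using vp_props[OF lm] by simp
    have "(\<Sum>i<d lam. rho lam (W2 * star x) i i) = inverse (vp (a lam)) * (\<Sum>s<d lam. rho lam (star x) s s)"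
      using lm by (simp add: rho_Wg_mult sum_distrib_left)
    moreover have "T lam = vp (a lam) * (\<Sum>s<d lam. rho lam (star x) s s)"
      unfolding T_def by (simp add: sum_distrib_left)
    ultimately show "inverse (c lam) * (\<Sum>i<d lam. rho lam (W2 * star x) i i) = inverse (fK lam) * T lam"
      using fK_props(6)[OF lm] cn vn by (simp add: field_simps)
  qed
  have "red (tau (W2 * star x)) = (\<Sum>lam\<in>Lam. red (inverse (fK lam) * T lam))"
    unfolding e by (rule red_sum) (simp add: inner)
  also have "\<dots> = nn x"
    unfolding nconst_def by (rule sum.cong) (simp_all add: inner)
  finally show ?thesis ..
qed

lemma nn_star: assumes "x \<in> B" shows "nn (star x) = nn x"
proof -
  have "tau (W2 * star x) = tau (star (W2 * star x))" by (simp add: tau_star)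
  also have "\<dots> = tau (x * W2)" by (simp add: star_mult W2_star)
  also have "\<dots> = tau (W2 * x)" by (simp add: Wg_central)
  finally show ?thesis using nn_formula[OF assms] nn_formula[OF starB[OF assms]] by simp
qed

lemma GG_star: assumes "x \<in> B" "y \<in> B" "z \<in> B"
  shows "GG (star y) (star x) (star z) = GG x y z"
proof -
  have "W1 * (star y * (star x * star z)) = star (W1 * (z * (x * y)))"
    by (simp add: star_mult W1_star Wg_central mult.assoc)
  then have "tau (W1 * (star y * (star x * star z))) = tau (W1 * (z * (x * y)))"
    by (simp add: tau_star)
  also have "\<dots> = tau (z * (W1 * (x * y)))" by (simp add: Wg_central mult.assoc)
  also have "\<dots> = tau ((W1 * (x * y)) * z)" by (rule tau_comm)
  also have "\<dots> = tau (W1 * (x * (y * z)))" by (simp add: mult.assoc)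
  finally show ?thesis using GG_formula assms starB by simp
qed

end



lemma sum4_delta:
  fixes d :: "'l \<Rightarrow> nat"
  assumes "finite L" "lam \<in> L" "k < d lam" "l < d lam"
  shows "(\<Sum>ka\<in>L. \<Sum>s<d ka. \<Sum>t<d ka. \<Sum>u<d ka. (if ka = lam \<and> s = k \<and> u = l then X ka s t u else 0))
       = (\<Sum>t<d lam. X lam k t l)"
proof -
  have "(\<Sum>ka\<in>L. \<Sum>s<d ka. \<Sum>t<d ka. \<Sum>u<d ka. (if ka = lam \<and> s = k \<and> u = l then X ka s t u else 0))
      = (\<Sum>ka\<in>L. if ka = lam then (\<Sum>t<d lam. X lam k t l) else 0)"
  proof (rule sum.cong)
    fix ka assume "ka \<in> L"
    show "(\<Sum>s<d ka. \<Sum>t<d ka. \<Sum>u<d ka. (if ka = lam \<and> s = k \<and> u = l then X ka s t u else 0))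
      = (if ka = lam then (\<Sum>t<d lam. X lam k t l) else 0)"
    proof (cases "ka = lam")
      case True
      have "(\<Sum>s<d ka. \<Sum>t<d ka. \<Sum>u<d ka. (if ka = lam \<and> s = k \<and> u = l then X ka s t u else 0))
          = (\<Sum>s<d lam. if s = k then (\<Sum>t<d lam. X lam s t l) else 0)"
        using True assms by (intro sum.cong) (auto simp: sum.delta' sum.delta)
      also have "\<dots> = (\<Sum>t<d lam. X lam k t l)" using assms by (simp add: sum.delta)
      finally show ?thesis using True by simp
    qed simp
  qed simp
  also have "\<dots> = (\<Sum>t<d lam. X lam k t l)" using assms by (simp add: sum.delta)
  finally show ?thesis .
qed

context Jset begin

definition Phi :: "('h \<Rightarrow> 'f) \<Rightarrow> 'l \<Rightarrow> nat \<Rightarrow> nat \<Rightarrow> 'f" where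
  "Phi j lam k l = (\<Sum>x\<in>B. j x * C lam x k l)"

abbreviation "JM \<equiv> Jmult B star GG"

lemma key_mult:
  assumes lm: "lam \<in> Lam" "k < d lam" "l < d lam" and xy: "x \<in> B" "y \<in> B"
  shows "(\<Sum>w\<in>B. GG x y (star w) * C lam w k l) = (\<Sum>t<d lam. C lam x k t * C lam y t l)"
proof -
  have "(\<Sum>w\<in>B. GG x y (star w) * C lam w k l)
     = (\<Sum>w\<in>B. \<Sum>ka\<in>Lam. \<Sum>s<d ka. \<Sum>t<d ka. \<Sum>u<d ka.
          (inverse (fr ka) * C ka x s t * C ka y t u) * (C ka (star w) u s * C lam w k l))"
    unfolding gam_def by (simp only: sum_distrib_right) (simp add: ac_simps)
  also have "\<dots> = (\<Sum>ka\<in>Lam. \<Sum>s<d ka. \<Sum>t<d ka. \<Sum>u<d ka. \<Sum>w\<in>B.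
          (inverse (fr ka) * C ka x s t * C ka y t u) * (C ka (star w) u s * C lam w k l))"
    by (simp only: sum.swap[where A = B])
  also have "\<dots> = (\<Sum>ka\<in>Lam. \<Sum>s<d ka. \<Sum>t<d ka. \<Sum>u<d ka.
          (inverse (fr ka) * C ka x s t * C ka y t u) * (\<Sum>w\<in>B. C ka (star w) u s * C lam w k l))"
    by (simp only: sum_distrib_left)
  also have "\<dots> = (\<Sum>ka\<in>Lam. \<Sum>s<d ka. \<Sum>t<d ka. \<Sum>u<d ka.
          (if ka = lam \<and> s = k \<and> u = l then C ka x s t * C ka y t u else 0))"
    using lm fK_props(4) by (intro sum.cong refl) (auto simp: red_row_orth)
  also have "\<dots> = (\<Sum>t<d lam. C lam x k t * C lam y t l)"
    using finLam lm by (rule sum4_delta[where X = "\<lambda>ka s t u. C ka x s t * C ka y t u"])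
  finally show ?thesis .
qed

lemma Phi_mult:
  assumes lm: "lam \<in> Lam" "k < d lam" "l < d lam"
  shows "Phi (JM j j') lam k l = (\<Sum>t<d lam. Phi j lam k t * Phi j' lam t l)"
proof -
  have "Phi (JM j j') lam k l = (\<Sum>w\<in>B. (\<Sum>x\<in>B. \<Sum>y\<in>B. j x * j' y * GG x y (star w)) * C lam w k l)"
    unfolding Phi_def Jmult_def by (intro sum.cong) auto
  also have "\<dots> = (\<Sum>w\<in>B. \<Sum>x\<in>B. \<Sum>y\<in>B. j x * j' y * (GG x y (star w) * C lam w k l))"
    by (simp only: sum_distrib_right mult.assoc)
  also have "\<dots> = (\<Sum>x\<in>B. \<Sum>w\<in>B. \<Sum>y\<in>B. j x * j' y * (GG x y (star w) * C lam w k l))"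
    by (rule sum.swap)
  also have "\<dots> = (\<Sum>x\<in>B. \<Sum>y\<in>B. \<Sum>w\<in>B. j x * j' y * (GG x y (star w) * C lam w k l))"
    by (rule sum.cong, rule refl, rule sum.swap)
  also have "\<dots> = (\<Sum>x\<in>B. \<Sum>y\<in>B. j x * j' y * (\<Sum>w\<in>B. GG x y (star w) * C lam w k l))"
    by (simp only: sum_distrib_left)
  also have "\<dots> = (\<Sum>x\<in>B. \<Sum>y\<in>B. j x * j' y * (\<Sum>t<d lam. C lam x k t * C lam y t l))"
    using lm by (intro sum.cong refl) (simp add: key_mult)
  also have "\<dots> = (\<Sum>t<d lam. Phi j lam k t * Phi j' lam t l)"
  proof -
    have "(\<Sum>x\<in>B. \<Sum>y\<in>B. j x * j' y * (\<Sum>t<d lam. C lam x k t * C lam y t l))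
        = (\<Sum>x\<in>B. \<Sum>y\<in>B. \<Sum>t<d lam. (j x * C lam x k t) * (j' y * C lam y t l))"
      by (simp only: sum_distrib_left) (simp add: ac_simps)
    also have "\<dots> = (\<Sum>x\<in>B. \<Sum>t<d lam. \<Sum>y\<in>B. (j x * C lam x k t) * (j' y * C lam y t l))"
      by (rule sum.cong, rule refl, rule sum.swap)
    also have "\<dots> = (\<Sum>t<d lam. \<Sum>x\<in>B. \<Sum>y\<in>B. (j x * C lam x k t) * (j' y * C lam y t l))"
      by (rule sum.swap)
    also have "\<dots> = (\<Sum>t<d lam. Phi j lam k t * Phi j' lam t l)"
      unfolding Phi_def by (simp only: sum_product)
    finally show ?thesis .
  qed
  finally show ?thesis .
qed

end



context Jset begin

lemma JM_car: "JM j j' \<in> Jcar B"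
  unfolding Jcar_def Jmult_def by auto

lemma expansion:
  assumes y: "y \<in> B"
  shows "j y = (\<Sum>lam\<in>Lam. inverse (fr lam) * (\<Sum>k<d lam. \<Sum>l<d lam. Phi j lam k l * C lam (star y) l k))"
proof -
  have "j y = (\<Sum>x\<in>B. j x * (if x = y then 1 else 0))"
    using y finB by (simp add: if_distrib[of "\<lambda>z. j _ * z"] cong: if_cong)
  also have "\<dots> = (\<Sum>x\<in>B. j x * (\<Sum>lam\<in>Lam. inverse (fr lam) * (\<Sum>k<d lam. \<Sum>l<d lam. C lam x k l * C lam (star y) l k)))"
    using y by (intro sum.cong refl) (simp add: red_col_orth)
  also have "\<dots> = (\<Sum>x\<in>B. \<Sum>lam\<in>Lam. \<Sum>k<d lam. \<Sum>l<d lam. j x * (inverse (fr lam) * (C lam x k l * C lam (star y) l k)))"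
    by (simp only: sum_distrib_left)
  also have "\<dots> = (\<Sum>lam\<in>Lam. \<Sum>k<d lam. \<Sum>l<d lam. \<Sum>x\<in>B. j x * (inverse (fr lam) * (C lam x k l * C lam (star y) l k)))"
    by (simp only: sum.swap[where A = B])
  also have "\<dots> = (\<Sum>lam\<in>Lam. inverse (fr lam) * (\<Sum>k<d lam. \<Sum>l<d lam. Phi j lam k l * C lam (star y) l k))"
    unfolding Phi_def by (simp only: sum_distrib_left sum_distrib_right) (simp add: ac_simps)
  finally show ?thesis .
qed

lemma Phi_inj:
  assumes "j \<in> Jcar B" "j' \<in> Jcar B"
    and "\<And>lam k l. lam \<in> Lam \<Longrightarrow> k < d lam \<Longrightarrow> l < d lam \<Longrightarrow> Phi j lam k l = Phi j' lam k l"
  shows "j = j'"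
proof
  fix w show "j w = j' w"
  proof (cases "w \<in> B")
    case True
    have "(\<Sum>lam\<in>Lam. inverse (fr lam) * (\<Sum>k<d lam. \<Sum>l<d lam. Phi j lam k l * C lam (star w) l k))
        = (\<Sum>lam\<in>Lam. inverse (fr lam) * (\<Sum>k<d lam. \<Sum>l<d lam. Phi j' lam k l * C lam (star w) l k))"
      by (intro sum.cong refl arg_cong2[where f = "(*)"]) (auto simp: assms(3))
    then show ?thesis using expansion[OF True, of j] expansion[OF True, of j'] by simp
  next
    case False then show ?thesis using assms(1,2) unfolding Jcar_def by auto
  qed
qed

lemma Phi_Jt: "x \<in> B \<Longrightarrow> Phi (Jt x) lam k l = C lam x k l"
  unfolding Phi_def Jt_def using finB by (simp add: if_distrib[of "\<lambda>z. z * _"] cong: if_cong)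

lemma Jone_B: "x \<in> B \<Longrightarrow> Jone B nn x = nn x"
  unfolding Jone_def by auto

lemma Jone_car: "Jone B nn \<in> Jcar B"
  unfolding Jone_def Jcar_def by auto

lemma Phi_one:
  assumes lm: "lam \<in> Lam" "k < d lam" "l < d lam"
  shows "Phi (Jone B nn) lam k l = (if k = l then 1 else 0)"
proof -
  have "Phi (Jone B nn) lam k l = (\<Sum>x\<in>B. (\<Sum>ka\<in>Lam. \<Sum>s<d ka. inverse (fr ka) * C ka (star x) s s) * C lam x k l)"
    unfolding Phi_def by (intro sum.cong refl) (subst Jone_B, assumption, simp add: nconst_def)
  also have "\<dots> = (\<Sum>x\<in>B. \<Sum>ka\<in>Lam. \<Sum>s<d ka. inverse (fr ka) * (C ka (star x) s s * C lam x k l))"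
    by (simp only: sum_distrib_right mult.assoc)
  also have "\<dots> = (\<Sum>ka\<in>Lam. \<Sum>s<d ka. \<Sum>x\<in>B. inverse (fr ka) * (C ka (star x) s s * C lam x k l))"
    by (simp only: sum.swap[where A = B])
  also have "\<dots> = (\<Sum>ka\<in>Lam. \<Sum>s<d ka. inverse (fr ka) * (if ka = lam \<and> s = k \<and> s = l then fr ka else 0))"
    using lm by (intro sum.cong refl) (simp add: sum_distrib_left[symmetric] red_row_orth)
  also have "\<dots> = (\<Sum>ka\<in>Lam. if ka = lam then (if k = l then 1 else 0) else 0)"
  proof (intro sum.cong refl)
    fix ka assume ka: "ka \<in> Lam"
    show "(\<Sum>s<d ka. inverse (fr ka) * (if ka = lam \<and> s = k \<and> s = l then fr ka else 0))
        = (if ka = lam then (if k = l then 1 else 0) else 0)"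
    proof (cases "ka = lam")
      case True
      have "(\<Sum>s<d ka. inverse (fr ka) * (if ka = lam \<and> s = k \<and> s = l then fr ka else 0))
          = (\<Sum>s<d lam. if s = k then (if k = l then 1 else 0) else 0)"
        using True fK_props(4)[OF ka] by (intro sum.cong) auto
      then show ?thesis using True lm by simp
    qed simp
  qed
  also have "\<dots> = (if k = l then 1 else 0)" using lm finLam by simp
  finally show ?thesis .
qed

lemma trace_formula:
  "Jtrace B nn j = (\<Sum>lam\<in>Lam. inverse (fr lam) * (\<Sum>s<d lam. Phi j lam s s))"
proof -
  have "Jtrace B nn j = (\<Sum>x\<in>B. j x * nn (star x))"
    unfolding Jtrace_def by (intro sum.cong refl) (simp add: nn_star)
  also have "\<dots> = (\<Sum>x\<in>B. j x * (\<Sum>lam\<in>Lam. \<Sum>s<d lam. inverse (fr lam) * C lam x s s))"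
    unfolding nconst_def by simp
  also have "\<dots> = (\<Sum>x\<in>B. \<Sum>lam\<in>Lam. \<Sum>s<d lam. j x * (inverse (fr lam) * C lam x s s))"
    by (simp only: sum_distrib_left)
  also have "\<dots> = (\<Sum>lam\<in>Lam. \<Sum>s<d lam. \<Sum>x\<in>B. j x * (inverse (fr lam) * C lam x s s))"
    by (simp only: sum.swap[where A = B])
  also have "\<dots> = (\<Sum>lam\<in>Lam. inverse (fr lam) * (\<Sum>s<d lam. Phi j lam s s))"
    unfolding Phi_def by (simp only: sum_distrib_left sum_distrib_right) (simp add: ac_simps)
  finally show ?thesis .
qed

lemma Jstar_Jstar: "Jstar star (Jstar star j) = j"
  unfolding Jstar_def by simp

lemma Jstar_car: "j \<in> Jcar B \<Longrightarrow> Jstar star j \<in> Jcar B"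
proof -
  assume j: "j \<in> Jcar B"
  have "star w \<notin> B" if "w \<notin> B" for w
  proof
    assume "star w \<in> B" then have "star (star w) \<in> B" by (rule starB)
    then show False using that by simp
  qed
  then show ?thesis using j unfolding Jstar_def Jcar_def by auto
qed

lemma Jstar_Jt: "Jstar star (Jt y) = Jt (star y)"
proof
  fix w
  have "star w = y \<longleftrightarrow> w = star y" by (metis star_star)
  then show "Jstar star (Jt y) w = Jt (star y) w" unfolding Jstar_def Jt_def by simp
qed

lemma Jstar_mult: "Jstar star (JM j j') = JM (Jstar star j') (Jstar star j)"
proof
  fix w
  show "Jstar star (JM j j') w = JM (Jstar star j') (Jstar star j) w"
  proof (cases "w \<in> B")
    case False
    then have "star w \<notin> B" using starB by (metis star_star)
    then show ?thesis using False unfolding Jstar_def Jmult_def by simp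
  next
    case True
    have "JM (Jstar star j') (Jstar star j) w = (\<Sum>x\<in>B. \<Sum>y\<in>B. j' (star x) * j (star y) * GG x y (star w))"
      using True unfolding Jmult_def Jstar_def by simp
    also have "\<dots> = (\<Sum>x\<in>B. \<Sum>y\<in>B. j' x * j y * GG (star x) (star y) (star w))"
      using sum_starB[where f = "\<lambda>x. \<Sum>y\<in>B. j' x * j (star y) * GG (star x) y (star w)"]
        sum_starB[where f = "\<lambda>y. j' _ * j y * GG _ (star y) (star w)"]
      by simp
    also have "\<dots> = (\<Sum>y\<in>B. \<Sum>x\<in>B. j' x * j y * GG (star x) (star y) (star w))"
      by (rule sum.swap)
    also have "\<dots> = (\<Sum>y\<in>B. \<Sum>x\<in>B. j y * j' x * GG y x w)"
      using True by (intro sum.cong refl) (simp add: GG_star mult.commute)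
    also have "\<dots> = Jstar star (JM j j') w"
      using True starB unfolding Jmult_def Jstar_def by simp
    finally show ?thesis ..
  qed
qed

end


context Jset begin
lemma main_J:
    "(\<forall>j1\<in>Jcar B. \<forall>j2\<in>Jcar B. \<forall>j3\<in>Jcar B.
        JM (JM j1 j2) j3 = JM j1 (JM j2 j3))
     \<and> Jone B nn \<in> Jcar B
     \<and> (\<forall>j\<in>Jcar B. JM (Jone B nn) j = j \<and> JM j (Jone B nn) = j)
     \<and> (\<forall>j\<in>Jcar B. \<forall>j'\<in>Jcar B.
          Jtrace B nn (JM j j') = Jtrace B nn (JM j' j))
     \<and> (\<forall>j\<in>Jcar B. (\<forall>j'\<in>Jcar B. Jtrace B nn (JM j j') = 0) \<longrightarrow> j = (\<lambda>_. 0))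
     \<and> bij_betw (Jstar star) (Jcar B) (Jcar B)
     \<and> (\<forall>j\<in>(Jcar B :: ('h \<Rightarrow> 'f) set). Jstar star (Jstar star j) = j)
     \<and> (\<forall>j\<in>Jcar B. \<forall>j'\<in>Jcar B.
          Jstar star (JM j j') = JM (Jstar star j') (Jstar star j))
     \<and> (\<forall>x\<in>B. \<forall>y\<in>B.
          Jtrace B nn (JM (Jt x) (Jstar star (Jt y))) = (if x = y then 1 else 0))"
proof (intro conjI ballI impI)
  fix j1 j2 j3 :: "'h \<Rightarrow> 'f" assume "j1 \<in> Jcar B" "j2 \<in> Jcar B" "j3 \<in> Jcar B"
  show "JM (JM j1 j2) j3 = JM j1 (JM j2 j3)"
  proof (rule Phi_inj[OF JM_car JM_car])
    fix lam k l assume lm: "lam \<in> Lam" "k < d lam" "l < d lam"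
    have "Phi (JM (JM j1 j2) j3) lam k l = (\<Sum>t<d lam. \<Sum>r<d lam. Phi j1 lam k r * Phi j2 lam r t * Phi j3 lam t l)"
      using lm by (simp add: Phi_mult sum_distrib_right)
    also have "\<dots> = (\<Sum>r<d lam. \<Sum>t<d lam. Phi j1 lam k r * Phi j2 lam r t * Phi j3 lam t l)"
      by (rule sum.swap)
    also have "\<dots> = Phi (JM j1 (JM j2 j3)) lam k l"
      using lm by (simp add: Phi_mult sum_distrib_left mult.assoc)
    finally show "Phi (JM (JM j1 j2) j3) lam k l = Phi (JM j1 (JM j2 j3)) lam k l" .
  qed
next
  show "Jone B nn \<in> Jcar B" by (rule Jone_car)
next
  fix j :: "'h \<Rightarrow> 'f" assume j: "j \<in> Jcar B"
  show "JM (Jone B nn) j = j"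
    by (rule Phi_inj[OF JM_car j]) (simp add: Phi_mult Phi_one ifmult sum.delta)
  show "JM j (Jone B nn) = j"
    by (rule Phi_inj[OF JM_car j]) (simp add: Phi_mult Phi_one ifmult sum.delta')
next
  fix j j' :: "'h \<Rightarrow> 'f"
  have tr: "(\<Sum>s<d lam. Phi (JM j j') lam s s) = (\<Sum>s<d lam. Phi (JM j' j) lam s s)" if lm: "lam \<in> Lam" for lam
  proof -
    have "(\<Sum>s<d lam. Phi (JM j j') lam s s) = (\<Sum>s<d lam. \<Sum>t<d lam. Phi j lam s t * Phi j' lam t s)"
      using lm by (simp add: Phi_mult)
    also have "\<dots> = (\<Sum>t<d lam. \<Sum>s<d lam. Phi j lam s t * Phi j' lam t s)" by (rule sum.swap)
    also have "\<dots> = (\<Sum>s<d lam. Phi (JM j' j) lam s s)"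
      using lm by (simp add: Phi_mult mult.commute)
    finally show ?thesis .
  qed
  show "Jtrace B nn (JM j j') = Jtrace B nn (JM j' j)"
    unfolding trace_formula using tr by (intro sum.cong refl) simp
next
  fix j :: "'h \<Rightarrow> 'f" assume j: "j \<in> Jcar B" and h: "\<forall>j'\<in>Jcar B. Jtrace B nn (JM j j') = 0"
  show "j = (\<lambda>_. 0)"
  proof
    fix y show "j y = 0"
    proof (cases "y \<in> B")
      case True
      have jt: "Jt (star y) \<in> Jcar B" unfolding Jt_def Jcar_def using starB[OF True] by auto
      have tr: "(\<Sum>s<d lam. Phi (JM j (Jt (star y))) lam s s) = (\<Sum>k<d lam. \<Sum>l<d lam. Phi j lam k l * C lam (star y) l k)"
        if lm: "lam \<in> Lam" for lam
          using lm by (simp add: Phi_mult Phi_Jt starB[OF True])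
      have "Jtrace B nn (JM j (Jt (star y))) = j y"
        unfolding trace_formula expansion[OF True, of j] using tr by (intro sum.cong refl) simp
      then show ?thesis using h jt by metis
    next
      case False then show ?thesis using j unfolding Jcar_def by auto
    qed
  qed
next
  show "bij_betw (Jstar star) (Jcar B) (Jcar B)"
    by (rule bij_betw_byWitness[of _ "Jstar star"]) (auto simp: Jstar_Jstar Jstar_car)
next
  fix j :: "'h \<Rightarrow> 'f" show "Jstar star (Jstar star j) = j" by (rule Jstar_Jstar)
next
  fix j j' :: "'h \<Rightarrow> 'f" show "Jstar star (JM j j') = JM (Jstar star j') (Jstar star j)" by (rule Jstar_mult)
next
  fix x y assume xy: "x \<in> B" "y \<in> B"
  have "Jtrace B nn (JM (Jt x) (Jstar star (Jt y)))
      = (\<Sum>lam\<in>Lam. inverse (fr lam) * (\<Sum>k<d lam. \<Sum>l<d lam. C lam x k l * C lam (star y) l k))"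
    unfolding trace_formula Jstar_Jt using xy
    by (intro sum.cong refl) (simp add: Phi_mult Phi_Jt starB)
  then show "Jtrace B nn (JM (Jt x) (Jstar star (Jt y))) = (if x = y then 1 else 0)"
    using red_col_orth[OF xy] by simp
qed

end

theorem mainTheorem8:
  fixes \<nu> :: "'k::field \<Rightarrow> 'g::linordered_ab_group_add"
    and red :: "'k \<Rightarrow> 'f::field"
    and scale :: "'k \<Rightarrow> 'h::ring_1 \<Rightarrow> 'h"
    and \<tau> :: "'h \<Rightarrow> 'k"
    and star :: "'h \<Rightarrow> 'h"
    and B :: "'h set"
    and \<Lambda> :: "'l set"
    and d :: "'l \<Rightarrow> nat"
    and \<rho> :: "'l \<Rightarrow> 'h \<Rightarrow> nat \<Rightarrow> nat \<Rightarrow> 'k"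
    and c :: "'l \<Rightarrow> 'k"
    and a :: "'l \<Rightarrow> 'g"
    and vp :: "'g \<Rightarrow> 'k"
  assumes val: "surj_valuation \<nu>"
    and res: "residue_map \<nu> red"
    and freal: "formally_real TYPE('f)"
    and alg: "K_algebra scale"
    and trace: "symmetrizing_trace scale \<tau>"
    and inv: "involutive_antiauto scale star"
    and Bsym: "star_sym_basis scale \<tau> star B"
    and wed: "wedderburn scale \<Lambda> d \<rho>"
    and schur_nz: "\<forall>lam\<in>\<Lambda>. c lam \<noteq> 0"
    and schur: "\<forall>h. \<tau> h = (\<Sum>lam\<in>\<Lambda>. inverse (c lam) * character (d lam) (\<rho> lam) h)"
    and a_def: "\<forall>lam\<in>\<Lambda>. a lam + a lam = - \<nu> (c lam)"
    and vp_hom: "vpow_hom \<nu> (gen_subgroup (a ` \<Lambda>)) vp"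
    and bal: "\<forall>lam\<in>\<Lambda>. balanced scale \<tau> star \<nu> (a lam) (d lam) (\<rho> lam)"
  defines "G \<equiv> gam \<Lambda> d red vp a c \<rho>"
    and "n \<equiv> nconst \<Lambda> d red vp a c \<rho> star"
  shows
    \<comment> \<open>(a) associative F-algebra with identity 1_J = sum_{d in D} n_d t_d\<close>
    "(\<forall>j1\<in>Jcar B. \<forall>j2\<in>Jcar B. \<forall>j3\<in>Jcar B.
        Jmult B star G (Jmult B star G j1 j2) j3 = Jmult B star G j1 (Jmult B star G j2 j3))
     \<and> Jone B n \<in> Jcar B
     \<and> (\<forall>j\<in>Jcar B. Jmult B star G (Jone B n) j = j \<and> Jmult B star G j (Jone B n) = j)
     \<comment> \<open>(b) tau-bar is a symmetrizing trace form\<close>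
     \<and> (\<forall>j\<in>Jcar B. \<forall>j'\<in>Jcar B.
          Jtrace B n (Jmult B star G j j') = Jtrace B n (Jmult B star G j' j))
     \<and> (\<forall>j\<in>Jcar B. (\<forall>j'\<in>Jcar B. Jtrace B n (Jmult B star G j j') = 0) \<longrightarrow> j = (\<lambda>_. 0))
     \<comment> \<open>(c) t_x |-> t_{x*} is an (involutive) antiautomorphism and (t_x) is *-symmetric\<close>
     \<and> bij_betw (Jstar star) (Jcar B) (Jcar B)
     \<and> (\<forall>j\<in>(Jcar B :: ('h \<Rightarrow> 'f) set). Jstar star (Jstar star j) = j)
     \<and> (\<forall>j\<in>Jcar B. \<forall>j'\<in>Jcar B.
          Jstar star (Jmult B star G j j') = Jmult B star G (Jstar star j') (Jstar star j))
     \<and> (\<forall>x\<in>B. \<forall>y\<in>B.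
          Jtrace B n (Jmult B star G (Jt x) (Jstar star (Jt y))) = (if x = y then 1 else 0))"
  proof -
  interpret Jset "\<nu>" red scale "\<tau>" star B "\<Lambda>" d "\<rho>" c a vp
    using assms(1-13) by (rule Jset.intro)
  show ?thesis using main_J unfolding assms(14,15) .
qed

end
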